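(* Under the same independence assumptions, for any two instances $\mathbf x,\mathbf y$: if $\lim_{n\to\infty}P(\mathbf y\in L(\mathbf x)\mid\mathcal D)=0$ then $P(\mathbf y\in\bar I(\mathbf x)\mid\mathcal D)=0$; if $\lim_{n\to\infty}P(\mathbf y\in L(\mathbf x)\mid\mathcal D)>0$ then $P(\mathbf y\in\bar I(\mathbf x)\mid\mathcal D)=1$.
   Context: Setting: $n$ instances with covariates in $\mathbb R^d$ form the dataset $\mathcal D=\mathcal D_n$; a forest $\Theta_K$ of $K$ axis-aligned causal trees is built on $\mathcal D$, the trees being independent given $\mathcal D$. $L_k(\mathbf x)$ is the leaf of tree $k$ containing $\mathbf x$ and $I(\mathbf x,\theta_k)$ its box; $P(\mathbf y\in L(\mathbf x)\mid\mathcal D)$ denotes $P(\mathbf y\in L_k(\mathbf x)\mid\mathcal D)$, the same for every $k$, and the events $\{\mathbf y\in L_k(\mathbf x)\}$, $k=1,\dots,K$, are independent given $\mathcal D$. LSLI with $K$ trees: $\bar I(\mathbf x,\Theta_K)=\bigcap_{s>K-\sqrt K}\bigcap_{1\le i_1<\cdots<i_s\le K}\bigcup_{k=1}^sI(\mathbf x,\theta_{i_k})$, and $P(\mathbf y\in\bar I(\mathbf x)\mid\mathcal D):=\lim_{K\to\infty}\lim_{n\to\infty}P(\mathbf y\in\bar I(\mathbf x,\Theta_K)\mid\mathcal D_n)$. *)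

theory Defs
  imports "HOL-Probability.Probability"
begin

text \<open>LSLI with K trees: given the boxes Ibox k (tree k's leaf box containing x),
  the intersection over all s > K - sqrt K and all index sets
  {i_1 < ... < i_s} of {1..K} of the union of the corresponding boxes.\<close>
definition LSLI :: "(nat \<Rightarrow> 'a set) \<Rightarrow> nat \<Rightarrow> 'a set" where
  "LSLI Ibox K = (\<Inter>s\<in>{s::nat. real K - sqrt (real K) < real s}.
      \<Inter>S\<in>{S. S \<subseteq> {1..K} \<and> card S = s}. \<Union>k\<in>S. Ibox k)"

end

theory Submission
  imports Defs "HOL-Real_Asymp.Real_Asymp"
begin

lemma lim_aux:
  assumes "0 < c" "c < (1::real)"
  shows "(\<lambda>K::nat. 2 powr sqrt (real K) * c ^ K) \<longlonglongrightarrow> 0"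
proof -
  have L: "ln c < 0" using assms by simp
  have "(\<lambda>K::nat. 2 powr sqrt (real K) * c ^ K) = (\<lambda>K. exp (sqrt (real K) * ln 2 + real K * ln c))"
    using assms by (auto simp: powr_def exp_add exp_of_nat_mult mult.commute)
  moreover have "(\<lambda>K::nat. exp (sqrt (real K) * ln 2 + real K * ln c)) \<longlonglongrightarrow> 0"
    using L by real_asymp
  ultimately show ?thesis by simp
qed

lemma LSLI_iff:
  "y \<in> LSLI Ibox K \<longleftrightarrow> sqrt (real K) \<le> real (card {k\<in>{1..K}. y \<in> Ibox k})"
proof -
  define Hit where "Hit = {k\<in>{1..K}. y \<in> Ibox k}"
  define Miss where "Miss = {k\<in>{1..K}. y \<notin> Ibox k}"
  have fin: "finite Hit" "finite Miss" unfolding Hit_def Miss_def by auto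
  have cardsum: "card Hit + card Miss = K"
  proof -
    have "Hit \<union> Miss = {1..K}" "Hit \<inter> Miss = {}" unfolding Hit_def Miss_def by auto
    then show ?thesis using card_Un_disjoint[OF fin] by simp
  qed
  show ?thesis
  proof
    assume A: "y \<in> LSLI Ibox K"
    show "sqrt (real K) \<le> real (card {k\<in>{1..K}. y \<in> Ibox k})"
    proof (rule ccontr)
      assume "\<not> ?thesis"
      then have "real K - sqrt (real K) < real (card Miss)"
        using cardsum unfolding Hit_def by linarith
      moreover have "Miss \<subseteq> {1..K}" unfolding Miss_def by auto
      ultimately have "y \<in> (\<Union>k\<in>Miss. Ibox k)"
        using A unfolding LSLI_def by blast
      then show False unfolding Miss_def by auto
    qed
  next
    assume B: "sqrt (real K) \<le> real (card {k\<in>{1..K}. y \<in> Ibox k})"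
    have X: "\<exists>k\<in>S. y \<in> Ibox k" if S: "real K - sqrt (real K) < real (card S)" "S \<subseteq> {1..K}" for S
    proof (rule ccontr)
      assume "\<not> ?thesis"
      then have "S \<subseteq> Miss" using S unfolding Miss_def by auto
      then have "card S \<le> card Miss" using fin by (simp add: card_mono)
      then show False using S B cardsum unfolding Hit_def by linarith
    qed
    show "y \<in> LSLI Ibox K"
      unfolding LSLI_def using X by auto
  qed
qed

context prob_space
begin

lemma hitset_prob:
  assumes ind: "indep_events A {1..}"
    and pa: "\<And>k. k \<ge> 1 \<Longrightarrow> prob (A k) = a"
    and H: "H \<subseteq> {1..(K::nat)}"
  shows "prob {\<omega>\<in>space M. {k\<in>{1..K}. \<omega> \<in> A k} = H}
         = (\<Prod>x\<in>H. a) * (\<Prod>x\<in>{1..K}-H. 1 - a)"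
proof -
  have ev: "\<And>k. k \<ge> 1 \<Longrightarrow> A k \<in> events" using ind unfolding indep_events_def by auto
  define B where "B k = (if k \<in> H then A k else space M - A k)" for k
  have indB: "indep_events B {1..}"
  proof -
    have "indep_sets (\<lambda>k. {A k}) {1..}" using ind unfolding indep_events_def_alt .
    then have "indep_sets (\<lambda>k. sigma_sets (space M) {A k}) {1..}"
      by (rule indep_sets_sigma) (auto simp: Int_stable_def)
    then have "indep_sets (\<lambda>k. {B k}) {1..}"
      by (rule indep_sets_mono_sets) (auto simp: B_def intro: sigma_sets.Basic sigma_sets.Compl)
    then show ?thesis unfolding indep_events_def_alt .
  qed
  show ?thesis
  proof (cases "K = 0")
    case True
    then have "H = {}" using H by auto
    then show ?thesis using True by (simp add: prob_space)
  next
    case False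
    have eq: "{\<omega>\<in>space M. {k\<in>{1..K}. \<omega> \<in> A k} = H} = (\<Inter>k\<in>{1..K}. B k)"
    proof -
      have sub: "\<And>k. k \<ge> 1 \<Longrightarrow> A k \<subseteq> space M" using ev sets.sets_into_space by blast
      show ?thesis
      proof (rule set_eqI, rule iffI)
        fix \<omega> assume L: "\<omega> \<in> {\<omega>\<in>space M. {k\<in>{1..K}. \<omega> \<in> A k} = H}"
        then have sp: "\<omega> \<in> space M" and hs: "{k\<in>{1..K}. \<omega> \<in> A k} = H" by auto
        show "\<omega> \<in> (\<Inter>k\<in>{1..K}. B k)"
        proof (rule INT_I)
          fix k assume k: "k \<in> {1..K}"
          show "\<omega> \<in> B k"
          proof (cases "k \<in> H")
            case True then have "\<omega> \<in> A k" using hs by blast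
            then show ?thesis using True unfolding B_def by simp
          next
            case False then have "\<omega> \<notin> A k" using hs k by blast
            then show ?thesis using False sp unfolding B_def by simp
          qed
        qed
      next
        fix \<omega> assume R: "\<omega> \<in> (\<Inter>k\<in>{1..K}. B k)"
        have Rk: "\<omega> \<in> B k" if "k \<in> {1..K}" for k using R that by blast
        have "1 \<in> {1..K}" using False by simp
        then have sp: "\<omega> \<in> space M" using Rk[of 1] sub[of 1] unfolding B_def
          by (cases "1 \<in> H") auto
        have "{k\<in>{1..K}. \<omega> \<in> A k} = H"
        proof (intro set_eqI iffI)
          fix k assume "k \<in> {k\<in>{1..K}. \<omega> \<in> A k}"
          then have k: "k\<in>{1..K}" "\<omega> \<in> A k" by auto
          show "k \<in> H"
          proof (rule ccontr)
            assume "k \<notin> H"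
            then have "\<omega> \<in> space M - A k" using Rk[OF k(1)] unfolding B_def by simp
            then show False using k(2) by blast
          qed
        next
          fix k assume kH: "k \<in> H"
          then have k: "k \<in> {1..K}" using H by blast
          then have "\<omega> \<in> A k" using Rk[OF k] kH unfolding B_def by simp
          then show "k \<in> {k\<in>{1..K}. \<omega> \<in> A k}" using k by blast
        qed
        then show "\<omega> \<in> {\<omega>\<in>space M. {k\<in>{1..K}. \<omega> \<in> A k} = H}" using sp by blast
      qed
    qed
    have "prob (\<Inter>k\<in>{1..K}. B k) = (\<Prod>k\<in>{1..K}. prob (B k))"
      using indB False unfolding indep_events_def by (auto)
    also have "\<dots> = (\<Prod>k\<in>H. prob (B k)) * (\<Prod>k\<in>{1..K}-H. prob (B k))"
      using prod.subset_diff[OF H] by (simp add: mult.commute)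
    also have "(\<Prod>k\<in>H. prob (B k)) = (\<Prod>x\<in>H. a)"
      using H pa by (intro prod.cong) (auto simp: B_def)
    also have "(\<Prod>k\<in>{1..K}-H. prob (B k)) = (\<Prod>x\<in>{1..K}-H. 1 - a)"
      using pa ev by (intro prod.cong) (auto simp: B_def prob_compl)
    finally show ?thesis using eq by simp
  qed
qed

lemma count_prob:
  assumes ind: "indep_events A {1..}"
    and pa: "\<And>k. k \<ge> 1 \<Longrightarrow> prob (A k) = a"
  shows "prob {\<omega>\<in>space M. P (card {k\<in>{1..(K::nat)}. \<omega> \<in> A k})}
         = (\<Sum>H\<in>{H\<in>Pow {1..K}. P (card H)}. (\<Prod>x\<in>H. a) * (\<Prod>x\<in>{1..K}-H. 1 - a))"
proof -
  have ev: "\<And>k. k \<ge> 1 \<Longrightarrow> A k \<in> events" using ind unfolding indep_events_def by auto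
  define E where "E H = {\<omega>\<in>space M. {k\<in>{1..K}. \<omega> \<in> A k} = H}" for H
  have Eev: "E H \<in> events" if HK: "H \<subseteq> {1..K}" for H
  proof -
    have "E H = space M \<inter> (\<Inter>k\<in>{1..K}. if k \<in> H then A k else space M - A k)"
    proof (rule set_eqI)
      fix \<omega>
      show "\<omega> \<in> E H \<longleftrightarrow> \<omega> \<in> space M \<inter> (\<Inter>k\<in>{1..K}. if k \<in> H then A k else space M - A k)"
      proof
        assume "\<omega> \<in> E H"
        then show "\<omega> \<in> space M \<inter> (\<Inter>k\<in>{1..K}. if k \<in> H then A k else space M - A k)"
          unfolding E_def by auto
      next
        assume R: "\<omega> \<in> space M \<inter> (\<Inter>k\<in>{1..K}. if k \<in> H then A k else space M - A k)"
        have Rk: "\<omega> \<in> (if k \<in> H then A k else space M - A k)" if "k \<in> {1..K}" for k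
          using R that by blast
        have "{k\<in>{1..K}. \<omega> \<in> A k} = H"
        proof (intro set_eqI iffI)
          fix k assume "k \<in> {k\<in>{1..K}. \<omega> \<in> A k}"
          then have k: "k\<in>{1..K}" "\<omega> \<in> A k" by auto
          show "k \<in> H"
          proof (rule ccontr)
            assume "k \<notin> H"
            then have "\<omega> \<in> space M - A k" using Rk[OF k(1)] by simp
            then show False using k(2) by blast
          qed
        next
          fix k assume kH: "k \<in> H"
          then have k: "k \<in> {1..K}" using HK by blast
          then have "\<omega> \<in> A k" using Rk[OF k] kH by simp
          then show "k \<in> {k\<in>{1..K}. \<omega> \<in> A k}" using k by blast
        qed
        then show "\<omega> \<in> E H" using R unfolding E_def by blast
      qed
    qed
    also have "\<dots> \<in> events"
    proof (cases "K = 0")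
      case True then show ?thesis by simp
    next
      case False then show ?thesis using ev by (intro sets.Int sets.top sets.finite_INT) auto
    qed
    finally show ?thesis .
  qed
  have "{\<omega>\<in>space M. P (card {k\<in>{1..K}. \<omega> \<in> A k})} = (\<Union>H\<in>{H\<in>Pow {1..K}. P (card H)}. E H)"
  proof (rule set_eqI, rule iffI)
    fix \<omega> assume "\<omega> \<in> {\<omega>\<in>space M. P (card {k\<in>{1..K}. \<omega> \<in> A k})}"
    then show "\<omega> \<in> (\<Union>H\<in>{H\<in>Pow {1..K}. P (card H)}. E H)"
      unfolding E_def by (intro UN_I[of "{k\<in>{1..K}. \<omega> \<in> A k}"]) auto
  next
    fix \<omega> assume "\<omega> \<in> (\<Union>H\<in>{H\<in>Pow {1..K}. P (card H)}. E H)"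
    then obtain H where "H \<in> {H\<in>Pow {1..K}. P (card H)}" "\<omega> \<in> E H" by blast
    then show "\<omega> \<in> {\<omega>\<in>space M. P (card {k\<in>{1..K}. \<omega> \<in> A k})}"
      unfolding E_def by simp
  qed
  then have "prob {\<omega>\<in>space M. P (card {k\<in>{1..K}. \<omega> \<in> A k})} = (\<Sum>H\<in>{H\<in>Pow {1..K}. P (card H)}. prob (E H))"
  proof -
    have "prob (\<Union>H\<in>{H\<in>Pow {1..K}. P (card H)}. E H) = (\<Sum>H\<in>{H\<in>Pow {1..K}. P (card H)}. prob (E H))"
    proof (rule finite_measure_finite_Union)
      show "finite {H\<in>Pow {1..K}. P (card H)}" by simp
      show "E ` {H\<in>Pow {1..K}. P (card H)} \<subseteq> events" using Eev by auto
      show "disjoint_family_on E {H\<in>Pow {1..K}. P (card H)}"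
        unfolding disjoint_family_on_def E_def by auto
    qed
    then show ?thesis using \<open>{\<omega>\<in>space M. P (card {k\<in>{1..K}. \<omega> \<in> A k})} = (\<Union>H\<in>{H\<in>Pow {1..K}. P (card H)}. E H)\<close>
      by simp
  qed
  also have "\<dots> = (\<Sum>H\<in>{H\<in>Pow {1..K}. P (card H)}. (\<Prod>x\<in>H. a) * (\<Prod>x\<in>{1..K}-H. 1 - a))"
    unfolding E_def by (intro sum.cong refl hitset_prob[OF ind pa]) auto
  finally show ?thesis .
qed

end

definition Qf :: "real \<Rightarrow> nat \<Rightarrow> real" where
  "Qf a K = (\<Sum>H\<in>{H\<in>Pow {1..K}. sqrt (real K) \<le> real (card H)}.
      (\<Prod>x\<in>H. a) * (\<Prod>x\<in>{1..K}-H. 1 - a))"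

lemma total_one: "(\<Sum>H\<in>Pow {1..K::nat}. (\<Prod>x\<in>H. (a::real)) * (\<Prod>x\<in>{1..K}-H. b)) = (a + b) ^ K"
  using prod_add[of "{1..K}" "\<lambda>_. a" "\<lambda>_. b"] by simp

lemma Qf_bound:
  fixes a :: real and K :: nat
  assumes "0 \<le> a" "a \<le> (1::real)"
  shows "1 - Qf a K \<le> 2 powr sqrt (real K) * (1 - a/2) ^ K" "Qf a K \<le> 1"
proof -
  define F where "F = {H\<in>Pow {1..K}. sqrt (real K) \<le> real (card H)}"
  define G where "G = {H\<in>Pow {1..K}. \<not> sqrt (real K) \<le> real (card H)}"
  define t where "t H = (\<Prod>x\<in>H. a) * (\<Prod>x\<in>{1..K}-H. 1 - a)" for H
  have tnn: "t H \<ge> 0" for H unfolding t_def using assms by (intro mult_nonneg_nonneg prod_nonneg) auto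
  have PU: "Pow {1..K} = F \<union> G" "F \<inter> G = {}" unfolding F_def G_def by auto
  have fin: "finite F" "finite G" unfolding F_def G_def by auto
  have "1 = (\<Sum>H\<in>Pow {1..K}. t H)" unfolding t_def using total_one[where K=K and a=a and b="1-a"] by simp
  also have "\<dots> = Qf a K + (\<Sum>H\<in>G. t H)"
    unfolding PU(1) using sum.union_disjoint[OF fin PU(2)] unfolding Qf_def F_def t_def by simp
  finally have one: "1 - Qf a K = (\<Sum>H\<in>G. t H)" by simp
  have "(\<Sum>H\<in>G. t H) \<ge> 0" using tnn by (simp add: sum_nonneg)
  then show "Qf a K \<le> 1" using one by simp
  have "(\<Sum>H\<in>G. t H) \<le> (\<Sum>H\<in>G. t H * (2 powr sqrt (real K) * (1/2) ^ card H))"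
  proof (intro sum_mono)
    fix H assume "H \<in> G"
    then have c: "real (card H) \<le> sqrt (real K)" unfolding G_def by auto
    have "(1::real) = 2 ^ card H * (1/2) ^ card H" by (simp add: power_one_over)
    also have "\<dots> = 2 powr real (card H) * (1/2) ^ card H" by (simp add: powr_realpow)
    also have "\<dots> \<le> 2 powr sqrt (real K) * (1/2) ^ card H"
      using c by (intro mult_right_mono) auto
    finally have "1 \<le> 2 powr sqrt (real K) * (1/2) ^ card H" .
    then show "t H \<le> t H * (2 powr sqrt (real K) * (1/2) ^ card H)"
      using tnn[of H] by (metis mult.right_neutral mult_left_mono)
  qed
  also have "\<dots> \<le> (\<Sum>H\<in>Pow {1..K}. t H * (2 powr sqrt (real K) * (1/2) ^ card H))"
    using tnn PU fin by (intro sum_mono2) auto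
  also have "\<dots> = 2 powr sqrt (real K) * (\<Sum>H\<in>Pow {1..K}. (\<Prod>x\<in>H. a/2) * (\<Prod>x\<in>{1..K}-H. 1 - a))"
    unfolding sum_distrib_left t_def
    by (intro sum.cong) (auto simp: power_mult_distrib power_divide)
  also have "\<dots> = 2 powr sqrt (real K) * (1 - a/2) ^ K"
    using total_one[where K=K and a="a/2" and b="1-a"] by simp
  finally show "1 - Qf a K \<le> 2 powr sqrt (real K) * (1 - a/2) ^ K" using one by simp
qed

theorem mainTheorem6:
  fixes M :: "nat \<Rightarrow> 'w measure"
    and I :: "nat \<Rightarrow> nat \<Rightarrow> real ^ 'd \<Rightarrow> 'w \<Rightarrow> (real ^ 'd) set"
    and x y :: "real ^ 'd"
    and p :: real
  assumes prob: "\<And>n. prob_space (M n)"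
    and leaf: "\<And>n k \<omega>. \<omega> \<in> space (M n) \<Longrightarrow> x \<in> I n k x \<omega>"
    and meas: "\<And>n k. {\<omega> \<in> space (M n). y \<in> I n k x \<omega>} \<in> sets (M n)"
    and indep: "\<And>n. prob_space.indep_events (M n)
                   (\<lambda>k. {\<omega> \<in> space (M n). y \<in> I n k x \<omega>}) {1..}"
    and same: "\<And>n k. k \<ge> 1 \<Longrightarrow> measure (M n) {\<omega> \<in> space (M n). y \<in> I n k x \<omega>}
                 = measure (M n) {\<omega> \<in> space (M n). y \<in> I n 1 x \<omega>}"
    and lim: "(\<lambda>n. measure (M n) {\<omega> \<in> space (M n). y \<in> I n 1 x \<omega>}) \<longlonglongrightarrow> p"
  shows "(p = 0 \<longrightarrow> (\<exists>q. (\<forall>K. (\<lambda>n. measure (M n)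
              {\<omega> \<in> space (M n). y \<in> LSLI (\<lambda>k. I n k x \<omega>) K}) \<longlonglongrightarrow> q K)
            \<and> q \<longlonglongrightarrow> 0))
       \<and> (p > 0 \<longrightarrow> (\<exists>q. (\<forall>K. (\<lambda>n. measure (M n)
              {\<omega> \<in> space (M n). y \<in> LSLI (\<lambda>k. I n k x \<omega>) K}) \<longlonglongrightarrow> q K)
            \<and> q \<longlonglongrightarrow> 1))"
proof -
  define pn where "pn n = measure (M n) {\<omega> \<in> space (M n). y \<in> I n 1 x \<omega>}" for n
  have meq: "measure (M n) {\<omega> \<in> space (M n). y \<in> LSLI (\<lambda>k. I n k x \<omega>) K} = Qf (pn n) K" for n K
  proof -
    have "{\<omega> \<in> space (M n). y \<in> LSLI (\<lambda>k. I n k x \<omega>) K}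
       = {\<omega> \<in> space (M n). (\<lambda>c. sqrt (real K) \<le> real c)
            (card {k\<in>{1..K}. \<omega> \<in> {\<omega> \<in> space (M n). y \<in> I n k x \<omega>}})}"
      by (auto simp: LSLI_iff)
    moreover have "measure (M n) {\<omega> \<in> space (M n). sqrt (real K) \<le> real
            (card {k\<in>{1..K}. \<omega> \<in> {\<omega> \<in> space (M n). y \<in> I n k x \<omega>}})} = Qf (pn n) K"
      using prob_space.count_prob[OF prob[of n] indep[of n] same[where n=n], where P="\<lambda>c. sqrt (real K) \<le> real c" and K=K]
      unfolding Qf_def pn_def by simp
    ultimately show ?thesis by simp
  qed
  have conv: "(\<lambda>n. measure (M n) {\<omega> \<in> space (M n). y \<in> LSLI (\<lambda>k. I n k x \<omega>) K}) \<longlonglongrightarrow> Qf p K" for K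
    unfolding meq Qf_def using lim unfolding pn_def[symmetric]
    by (intro tendsto_intros) auto
  have p01: "0 \<le> p" "p \<le> 1"
  proof -
    have "0 \<le> pn n" "pn n \<le> 1" for n
      unfolding pn_def using prob_space.prob_le_1[OF prob] by auto
    then show "0 \<le> p" "p \<le> 1" using lim unfolding pn_def[symmetric]
      by (auto intro: LIMSEQ_le_const LIMSEQ_le_const2)
  qed
  have part1: "(\<lambda>K. Qf 0 K) \<longlonglongrightarrow> 0"
  proof (rule tendsto_eventually, rule eventually_sequentiallyI[of 1])
    fix K :: nat assume "1 \<le> K"
    then have "sqrt (real K) \<ge> 1" by simp
    then have cp: "0 < card H" if "sqrt (real K) \<le> real (card H)" for H :: "nat set"
      using that by (metis of_nat_0 gr0I not_one_le_zero order_trans)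
    show "Qf 0 K = 0" unfolding Qf_def
      using \<open>1 \<le> K\<close> by (intro sum.neutral) (auto simp: power_0_left cp)
  qed
  have part2: "(\<lambda>K. Qf p K) \<longlonglongrightarrow> 1" if "p > 0"
  proof -
    have "(\<lambda>K. 2 powr sqrt (real K) * (1 - p/2) ^ K) \<longlonglongrightarrow> 0"
      using that p01 by (intro lim_aux) auto
    note B = this
    have lo: "\<forall>K. 0 \<le> 1 - Qf p K" using Qf_bound(2)[OF p01] by simp
    have hi: "\<forall>K. 1 - Qf p K \<le> 2 powr sqrt (real K) * (1 - p/2) ^ K"
      using Qf_bound(1)[OF p01] by blast
    have "(\<lambda>K. 1 - Qf p K) \<longlonglongrightarrow> 0"
    proof (rule tendsto_sandwich[of "\<lambda>_. 0" _ _ "\<lambda>K. 2 powr sqrt (real K) * (1 - p/2) ^ K"])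
      show "\<forall>\<^sub>F K in sequentially. 0 \<le> 1 - Qf p K" by (rule always_eventually) (rule lo)
      show "\<forall>\<^sub>F K in sequentially. 1 - Qf p K \<le> 2 powr sqrt (real K) * (1 - p/2) ^ K"
        by (rule always_eventually) (rule hi)
      show "(\<lambda>_. 0::real) \<longlonglongrightarrow> 0" by (rule tendsto_const)
      show "(\<lambda>K. 2 powr sqrt (real K) * (1 - p/2) ^ K) \<longlonglongrightarrow> 0" by (rule B)
    qed
    then have "(\<lambda>K. 1 - (1 - Qf p K)) \<longlonglongrightarrow> 1 - 0" by (intro tendsto_intros)
    then show ?thesis by simp
  qed
  show ?thesis
  proof (intro conjI impI)
    assume "p = 0"
    then show "\<exists>q. (\<forall>K. (\<lambda>n. measure (M n)
              {\<omega> \<in> space (M n). y \<in> LSLI (\<lambda>k. I n k x \<omega>) K}) \<longlonglongrightarrow> q K) \<and> q \<longlonglongrightarrow> 0"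
      using conv part1 by (intro exI[of _ "Qf p"]) simp
  next
    assume "p > 0"
    then show "\<exists>q. (\<forall>K. (\<lambda>n. measure (M n)
              {\<omega> \<in> space (M n). y \<in> LSLI (\<lambda>k. I n k x \<omega>) K}) \<longlonglongrightarrow> q K) \<and> q \<longlonglongrightarrow> 1"
      using conv part2 by (intro exI[of _ "Qf p"]) simp
  qed
qed

end
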